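(* There exist absolute constants $c,C>0$ such that for every $n\in\mathbb{N}$ there exists a set $S\subseteq\mathbb{F}_2^n$ with $c\sqrt{n}\le|\Delta(S)|\le C\sqrt{n}$ and $\rho(S)=2$.
   Context: For $x,y\in\mathbb{F}_2^n$, the Hamming distance is $d_H(x,y)=\#\{i:x_i\neq y_i\}$, and for $S\subseteq\mathbb{F}_2^n$, $\Delta(S)=\{d_H(x,y):x,y\in S\}$. A set $R\subseteq\mathbb{F}_2^n$ is called rainbow if the $\binom{|R|}{2}$ Hamming distances $d_H(x,y)$ over unordered pairs of distinct points $x,y\in R$ are pairwise distinct. $\rho(S)$ denotes the maximum size of a rainbow subset $R\subseteq S$. *)

theory Defs
  imports Complex_Main
begin

text \<open>Points of F_2^n are represented as boolean lists of length n.\<close>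

definition cube :: "nat \<Rightarrow> bool list set" where
  "cube n = {x. length x = n}"

definition hamming :: "bool list \<Rightarrow> bool list \<Rightarrow> nat" where
  "hamming x y = card {i. i < length x \<and> i < length y \<and> x ! i \<noteq> y ! i}"

definition dist_set :: "bool list set \<Rightarrow> nat set" where
  "dist_set S = {hamming x y | x y. x \<in> S \<and> y \<in> S}"

definition rainbow :: "bool list set \<Rightarrow> bool" where
  "rainbow R \<longleftrightarrow> (\<forall>x\<in>R. \<forall>y\<in>R. \<forall>u\<in>R. \<forall>v\<in>R.
      x \<noteq> y \<longrightarrow> u \<noteq> v \<longrightarrow> hamming x y = hamming u v \<longrightarrow> {x, y} = {u, v})"

definition rho :: "bool list set \<Rightarrow> nat" where
  "rho S = Max {card R | R. R \<subseteq> S \<and> rainbow R}"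

end

theory Submission
  imports Defs
begin

definition pt :: "nat \<Rightarrow> nat \<Rightarrow> nat \<Rightarrow> bool list" where
  "pt n K j = map (\<lambda>p. (1 \<le> p \<and> p < j) \<or> (j*K \<le> p \<and> p < j*K + j)) [0..<n]"

lemma ham_map: "hamming (map f [0..<n]) (map g [0..<n]) = card {p. p < n \<and> f p \<noteq> g p}"
  unfolding hamming_def by (auto intro!: arg_cong[where f=card])

lemma hamming_sym: "hamming x y = hamming y x"
  unfolding hamming_def by (metis (no_types, lifting) Collect_cong)

lemma hamming_self: "hamming x x = 0"
  unfolding hamming_def by simp

lemma length_pt: "pt n K j \<in> cube n"
  unfolding pt_def cube_def by simp

lemma ham_pt_lt:
  assumes "1 \<le> i" "i < j" "j < K" "K*K \<le> n"
  shows "hamming (pt n K i) (pt n K j) = 2*j"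
proof -
  have f1: "j \<le> i*K" using assms by (metis le_trans less_imp_le_nat mult_le_mono1 mult_1)
  have "(i+1)*K \<le> j*K" using assms by (intro mult_le_mono1) simp
  hence f2: "i*K + i < j*K" using assms by (simp add: algebra_simps)
  have "(j+1)*K \<le> K*K" using assms by (intro mult_le_mono1) simp
  hence f3: "j*K + j \<le> n" using assms by (simp add: algebra_simps)
  have eq: "{p. p < n \<and> ((1 \<le> p \<and> p < i) \<or> (i*K \<le> p \<and> p < i*K + i)) \<noteq>
                ((1 \<le> p \<and> p < j) \<or> (j*K \<le> p \<and> p < j*K + j))}
        = ({i..<j} \<union> {i*K..<i*K+i}) \<union> {j*K..<j*K+j}"
  proof -
    have g: "\<And>a b. j \<le> a \<Longrightarrow> a + i < b \<Longrightarrow> b + j \<le> n \<Longrightarrow>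
      {p. p < n \<and> ((1 \<le> p \<and> p < i) \<or> (a \<le> p \<and> p < a + i)) \<noteq>
                ((1 \<le> p \<and> p < j) \<or> (b \<le> p \<and> p < b + j))}
        = ({i..<j} \<union> {a..<a+i}) \<union> {b..<b+j}"
      using assms by auto
    show ?thesis by (rule g) (use f1 f2 f3 assms in linarith)+
  qed
  have d1: "{i..<j} \<inter> {i*K..<i*K+i} = {}"
  proof -
    have "\<And>a. j \<le> a \<Longrightarrow> {i..<j} \<inter> {a..<a+i} = {}" by auto
    thus ?thesis using f1 assms by simp
  qed
  have d2: "({i..<j} \<union> {i*K..<i*K+i}) \<inter> {j*K..<j*K+j} = {}"
  proof -
    have "\<And>a b. j \<le> a \<Longrightarrow> a + i < b \<Longrightarrow> ({i..<j} \<union> {a..<a+i}) \<inter> {b..<b+j} = {}" by auto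
    thus ?thesis using f1 f2 assms by simp
  qed
  have "card (({i..<j} \<union> {i*K..<i*K+i}) \<union> {j*K..<j*K+j}) = (j - i) + i + j"
    by (simp add: card_Un_disjoint[OF _ _ d2] card_Un_disjoint[OF _ _ d1])
  also have "\<dots> = 2*j" using assms by simp
  finally show ?thesis unfolding pt_def ham_map eq .
qed

lemma ham_pt:
  assumes "1 \<le> i" "1 \<le> j" "i < K" "j < K" "i \<noteq> j" "K*K \<le> n"
  shows "hamming (pt n K i) (pt n K j) = 2 * max i j"
proof (cases "i < j")
  case True thus ?thesis using ham_pt_lt assms by simp
next
  case False thus ?thesis using ham_pt_lt[of j i K n] assms hamming_sym by simp
qed

lemma rho_eq2:
  assumes "finite S" "\<And>R. R \<subseteq> S \<Longrightarrow> rainbow R \<Longrightarrow> card R \<le> 2"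
    "R0 \<subseteq> S" "rainbow R0" "card R0 = 2"
  shows "rho S = 2"
  unfolding rho_def
proof (rule Max_eqI)
  have "{card R |R. R \<subseteq> S \<and> rainbow R} \<subseteq> card ` Pow S" by auto
  thus "finite {card R |R. R \<subseteq> S \<and> rainbow R}"
    by (rule finite_subset) (use assms(1) in simp)
  show "\<And>y. y \<in> {card R |R. R \<subseteq> S \<and> rainbow R} \<Longrightarrow> y \<le> 2"
  proof -
    fix y assume "y \<in> {card R |R. R \<subseteq> S \<and> rainbow R}"
    then obtain R where "y = card R" "R \<subseteq> S" "rainbow R" by blast
    thus "y \<le> 2" using assms(2) by simp
  qed
  have "card R0 \<in> {card R |R. R \<subseteq> S \<and> rainbow R}" using assms(3,4) by blast
  thus "2 \<in> {card R |R. R \<subseteq> S \<and> rainbow R}" using assms(5) by simp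
qed

lemma three_elems:
  assumes "finite R" "card R > 2"
  obtains a b c where "a \<in> R" "b \<in> R" "c \<in> R" "a \<noteq> b" "a \<noteq> c" "b \<noteq> c"
proof -
  obtain a where a: "a \<in> R" using assms by (metis card.empty ex_in_conv not_less0)
  have "card (R - {a}) > 1" using assms a by simp
  then obtain b where b: "b \<in> R - {a}" by (metis card.empty ex_in_conv not_less0)
  have "card (R - {a} - {b}) > 0" using assms a b by (simp add: card_Diff_singleton)
  then obtain c where c: "c \<in> R - {a} - {b}" by (metis card.empty ex_in_conv less_irrefl)
  show ?thesis using that a b c by blast
qed

lemma big_case:
  assumes "K \<ge> 3" "K*K \<le> n"
  shows "\<exists>S. S \<subseteq> cube n \<and> card (dist_set S) = K - 1 \<and> rho S = 2"
proof -
  define S where "S = pt n K ` {1..<K}"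
  have sub: "S \<subseteq> cube n" unfolding S_def using length_pt by blast
  have ds: "dist_set S = insert 0 ((\<lambda>j. 2*j) ` {2..<K})"
  proof
    show "dist_set S \<subseteq> insert 0 ((\<lambda>j. 2*j) ` {2..<K})"
    proof
      fix d assume "d \<in> dist_set S"
      then obtain i j where ij: "i \<in> {1..<K}" "j \<in> {1..<K}" "d = hamming (pt n K i) (pt n K j)"
        unfolding dist_set_def S_def by blast
      show "d \<in> insert 0 ((\<lambda>j. 2*j) ` {2..<K})"
      proof (cases "i = j")
        case True thus ?thesis using ij hamming_self by simp
      next
        case False
        hence "d = 2 * max i j" using ij ham_pt assms by simp
        moreover have "max i j \<in> {2..<K}" using ij False by auto
        ultimately show ?thesis by blast
      qed
    qed
  next
    show "insert 0 ((\<lambda>j. 2*j) ` {2..<K}) \<subseteq> dist_set S"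
    proof
      fix d assume d: "d \<in> insert 0 ((\<lambda>j. 2*j) ` {2..<K})"
      have p1: "pt n K 1 \<in> S" unfolding S_def using assms by simp
      show "d \<in> dist_set S"
      proof (cases "d = 0")
        case True
        hence "d = hamming (pt n K 1) (pt n K 1)" using hamming_self by simp
        thus ?thesis unfolding dist_set_def using p1 by blast
      next
        case False
        then obtain j where j: "j \<in> {2..<K}" "d = 2*j" using d by auto
        have "pt n K j \<in> S" unfolding S_def using j by simp
        moreover have "d = hamming (pt n K 1) (pt n K j)" using j ham_pt[of 1 j K n] assms by simp
        ultimately show ?thesis unfolding dist_set_def using p1 by blast
      qed
    qed
  qed
  have "card (dist_set S) = Suc (K - 2)" unfolding ds
    by (subst card_insert_disjoint) (auto simp: card_image inj_on_def)
  hence cd: "card (dist_set S) = K - 1" using assms by simp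
  have fin: "finite S" unfolding S_def by simp
  have le2: "card R \<le> 2" if R: "R \<subseteq> S" "rainbow R" for R
  proof (rule ccontr)
    assume "\<not> card R \<le> 2"
    moreover have "finite R" using R fin finite_subset by blast
    ultimately obtain a b c where abc: "a \<in> R" "b \<in> R" "c \<in> R" "a \<noteq> b" "a \<noteq> c" "b \<noteq> c"
      using three_elems by (metis not_le)
    obtain i where i: "i \<in> {1..<K}" "a = pt n K i" using abc R unfolding S_def by blast
    obtain j where j: "j \<in> {1..<K}" "b = pt n K j" using abc R unfolding S_def by blast
    obtain l where l: "l \<in> {1..<K}" "c = pt n K l" using abc R unfolding S_def by blast
    have ij: "i \<noteq> j" "i \<noteq> l" "j \<noteq> l" using abc i j l by auto
    have hab: "hamming a b = 2 * max i j" using ham_pt i j ij assms by simp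
    have hac: "hamming a c = 2 * max i l" using ham_pt i l ij assms by simp
    have hbc: "hamming b c = 2 * max j l" using ham_pt j l ij assms by simp
    have rb: "\<And>x y u v. x \<in> R \<Longrightarrow> y \<in> R \<Longrightarrow> u \<in> R \<Longrightarrow> v \<in> R \<Longrightarrow> x \<noteq> y \<Longrightarrow> u \<noteq> v
       \<Longrightarrow> hamming x y = hamming u v \<Longrightarrow> {x, y} = {u, v}"
      using R(2) unfolding rainbow_def by blast
    consider "i < l \<and> j < l" | "i < j \<and> l < j" | "j < i \<and> l < i" using ij by linarith
    thus False
    proof cases
      case 1
      hence "hamming a c = hamming b c" using hac hbc by simp
      hence "{a, c} = {b, c}" using rb[OF abc(1) abc(3) abc(2) abc(3) abc(5) abc(6)] by simp
      thus False using abc by (auto simp: doubleton_eq_iff)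
    next
      case 2
      hence "max i j = j" "max j l = j" by auto
      hence "hamming a b = hamming c b" using hab hbc hamming_sym[of c b] by simp
      hence "{a, b} = {c, b}" using rb[OF abc(1) abc(2) abc(3) abc(2) abc(4)] abc(6) by auto
      thus False using abc by (auto simp: doubleton_eq_iff)
    next
      case 3
      hence "max i j = i" "max i l = i" by auto
      hence "hamming b a = hamming c a" using hab hac hamming_sym[of c a] hamming_sym[of b a] by simp
      hence "{b, a} = {c, a}" using rb[OF abc(2) abc(1) abc(3) abc(1)] abc(4,5) by auto
      thus False using abc by (auto simp: doubleton_eq_iff)
    qed
  qed
  define R0 where "R0 = {pt n K 1, pt n K 2}"
  have h12: "hamming (pt n K 1) (pt n K 2) = 4" using ham_pt[of 1 2 K n] assms by simp
  have ne: "pt n K 1 \<noteq> pt n K 2"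
  proof
    assume "pt n K 1 = pt n K 2" thus False using h12 hamming_self[of "pt n K 1"] by simp
  qed
  have R0S: "R0 \<subseteq> S" unfolding R0_def S_def using assms by auto
  have cR0: "card R0 = 2" unfolding R0_def using ne by simp
  have rR0: "rainbow R0" unfolding rainbow_def R0_def by auto
  have "rho S = 2" using rho_eq2[OF fin le2 R0S rR0 cR0] by blast
  thus ?thesis using sub cd by blast
qed

lemma small_case:
  assumes "n \<ge> 1"
  shows "\<exists>S. S \<subseteq> cube n \<and> card (dist_set S) = 2 \<and> rho S = 2"
proof -
  define x where "x = replicate n False"
  define y where "y = True # replicate (n - 1) False"
  have lx: "length x = n" and ly: "length y = n" using assms unfolding x_def y_def by auto
  have "{i. i < length x \<and> i < length y \<and> x ! i \<noteq> y ! i} = {0}"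
  proof (intro set_eqI iffI)
    fix i assume "i \<in> {i. i < length x \<and> i < length y \<and> x ! i \<noteq> y ! i}"
    hence i: "i < n" "x ! i \<noteq> y ! i" using lx by auto
    show "i \<in> {0}"
    proof (cases i)
      case (Suc k)
      hence "x ! i = False" "y ! i = False" using i unfolding x_def y_def by auto
      thus ?thesis using i by simp
    qed simp
  next
    fix i assume "i \<in> {0::nat}"
    hence i0: "i = 0" by simp
    have "x ! 0 = False" unfolding x_def using assms by simp
    moreover have "y ! 0 = True" unfolding y_def by simp
    ultimately show "i \<in> {i. i < length x \<and> i < length y \<and> x ! i \<noteq> y ! i}"
      using i0 lx ly assms by simp
  qed
  hence hxy: "hamming x y = 1" unfolding hamming_def by simp
  have hyx: "hamming y x = 1" using hxy hamming_sym by metis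
  have ne: "x \<noteq> y"
  proof
    assume "x = y" thus False using hxy hamming_self[of x] by simp
  qed
  define S where "S = {x, y}"
  have sub: "S \<subseteq> cube n" unfolding S_def cube_def using lx ly by simp
  have "dist_set S = {0, 1}" unfolding dist_set_def S_def
  proof (intro set_eqI iffI)
    fix d assume "d \<in> {hamming a b |a b. a \<in> {x, y} \<and> b \<in> {x, y}}"
    thus "d \<in> {0, 1}" using hxy hyx hamming_self by auto
  next
    fix d assume "d \<in> {0::nat, 1}"
    hence "d = hamming x x \<or> d = hamming x y" using hxy hamming_self by auto
    thus "d \<in> {hamming a b |a b. a \<in> {x, y} \<and> b \<in> {x, y}}" by blast
  qed
  hence cd: "card (dist_set S) = 2" by simp
  have fin: "finite S" unfolding S_def by simp
  have le2: "card R \<le> 2" if "R \<subseteq> S" "rainbow R" for R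
    using card_mono[OF fin that(1)] ne unfolding S_def by simp
  have rS: "rainbow S" unfolding rainbow_def S_def by auto
  have "rho S = 2" using rho_eq2[OF fin le2 _ rS] ne unfolding S_def by simp
  thus ?thesis using sub cd by blast
qed

theorem theorem1p4:
  shows "\<exists>c C :: real. c > 0 \<and> C > 0 \<and>
    (\<forall>n::nat. n \<ge> 1 \<longrightarrow> (\<exists>S. S \<subseteq> cube n \<and>
       c * sqrt (real n) \<le> real (card (dist_set S)) \<and>
       real (card (dist_set S)) \<le> C * sqrt (real n) \<and>
       rho S = 2))"
proof (rule exI[of _ "1/3"], rule exI[of _ 2], intro conjI allI impI)
  show "(1/3::real) > 0" "(2::real) > 0" by auto
  fix n :: nat assume n1: "n \<ge> 1"
  have s1: "sqrt (real n) \<ge> 1" using n1 by simp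
  show "\<exists>S. S \<subseteq> cube n \<and> 1/3 * sqrt (real n) \<le> real (card (dist_set S)) \<and>
       real (card (dist_set S)) \<le> 2 * sqrt (real n) \<and> rho S = 2"
  proof (cases "n < 9")
    case True
    have "sqrt (real n) < sqrt 9" using True by (subst real_sqrt_less_iff) simp
    hence "sqrt (real n) < 3" by simp
    obtain S where S: "S \<subseteq> cube n" "card (dist_set S) = 2" "rho S = 2"
      using small_case[OF n1] by blast
    have "1/3 * sqrt (real n) \<le> real (card (dist_set S))" using S(2) \<open>sqrt (real n) < 3\<close> by simp
    moreover have "real (card (dist_set S)) \<le> 2 * sqrt (real n)" using S(2) s1 by simp
    ultimately show ?thesis using S(1,3) by blast
  next
    case False
    define K where "K = nat \<lfloor>sqrt (real n)\<rfloor>"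
    have s3: "sqrt (real n) \<ge> 3"
    proof -
      have "sqrt 9 \<le> sqrt (real n)" using False by (subst real_sqrt_le_iff) simp
      thus ?thesis by simp
    qed
    have Kle: "real K \<le> sqrt (real n)" unfolding K_def using s3 by simp
    have Kgt: "sqrt (real n) < real K + 1" unfolding K_def using s3
      by (simp add: of_nat_nat)
    have K3: "K \<ge> 3" unfolding K_def using s3
      by (metis le_nat_floor numeral_le_real_of_nat_iff of_nat_numeral)
    have "real K * real K \<le> sqrt (real n) * sqrt (real n)" using Kle
      by (intro mult_mono) auto
    hence "real K * real K \<le> real n" by simp
    hence KK: "K*K \<le> n" by (metis of_nat_le_iff of_nat_mult)
    obtain S where S: "S \<subseteq> cube n" "card (dist_set S) = K - 1" "rho S = 2"
      using big_case[OF K3 KK] by blast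
    have rc: "real (card (dist_set S)) = real K - 1" using S K3 by simp
    have "1/3 * sqrt (real n) \<le> real (card (dist_set S))" unfolding rc using Kgt s3 by linarith
    moreover have "real (card (dist_set S)) \<le> 2 * sqrt (real n)" unfolding rc using Kle s3 by linarith
    ultimately show ?thesis using S(1,3) by blast
  qed
qed

end
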